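(* Let $r>0$, $\zeta_k>0$, $H>0$, $P_{\text{peak}}>0$, $\gamma_0>0$, $\theta_k\in\mathbb{R}$ and $\theta_l\in\mathbb{R}$ be fixed. For $\theta\in\mathbb{R}$ let $$S_{k,\max}(\theta)=\frac{P_{\text{peak}}\gamma_0}{r^2+\zeta_k^2+H^2-2r\zeta_k\cos(\theta-\theta_k)}.$$ Define $\hat b_k=\theta_l-\sin(\theta_l-\theta_k)$, $\hat A_k=r^2+\zeta_k^2+H^2-r\zeta_k\big(2\cos(\theta_l-\theta_k)+\sin^2(\theta_l-\theta_k)\big)$, $$\hat B_k=2r\zeta_k\left(\frac{1}{\hat A_k^2}-\frac{1}{(r\zeta_k\sin^2(\theta_l-\theta_k)+\hat A_k)^2}\right),$$ $$\hat C_k=\frac{1}{r\zeta_k\sin^2(\theta_l-\theta_k)+\hat A_k}+\frac{2r\zeta_k\sin^2(\theta_l-\theta_k)}{(r\zeta_k\sin^2(\theta_l-\theta_k)+\hat A_k)^2}-\frac{r\zeta_k\sin^2(\theta_l-\theta_k)}{\hat A_k^2},$$ and $$S^{\text{lb2}}_{k,\max}(\theta)=P_{\text{peak}}\gamma_0\left(-\frac{r\zeta_k(\theta-\hat b_k)^2}{\hat A_k^2}+\hat B_k\sin(\theta_l-\theta_k)(\theta-\hat b_k)+\hat C_k\right).$$ Then $\hat A_k>0$ and for all $\theta\in\mathbb{R}$, $$S^{\text{lb2}}_{k,\max}(\theta)\le\frac{P_{\text{peak}}\gamma_0}{r\zeta_k(\theta-\hat b_k)^2+\hat A_k}\le S_{k,\max}(\theta),$$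 with equality throughout at $\theta=\theta_l$; moreover $S^{\text{lb2}}_{k,\max}$ is concave in $\theta$. *)

theory Defs
  imports "HOL-Analysis.Analysis"
begin

definition S_max :: "real \<Rightarrow> real \<Rightarrow> real \<Rightarrow> real \<Rightarrow> real \<Rightarrow> real \<Rightarrow> real \<Rightarrow> real" where
  "S_max r \<zeta> H P \<gamma>0 \<theta>k \<theta> = P * \<gamma>0 / (r\<^sup>2 + \<zeta>\<^sup>2 + H\<^sup>2 - 2 * r * \<zeta> * cos (\<theta> - \<theta>k))"

definition b_hat :: "real \<Rightarrow> real \<Rightarrow> real" where
  "b_hat \<theta>k \<theta>l = \<theta>l - sin (\<theta>l - \<theta>k)"

definition A_hat :: "real \<Rightarrow> real \<Rightarrow> real \<Rightarrow> real \<Rightarrow> real \<Rightarrow> real" where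
  "A_hat r \<zeta> H \<theta>k \<theta>l = r\<^sup>2 + \<zeta>\<^sup>2 + H\<^sup>2 - r * \<zeta> * (2 * cos (\<theta>l - \<theta>k) + (sin (\<theta>l - \<theta>k))\<^sup>2)"

definition B_hat :: "real \<Rightarrow> real \<Rightarrow> real \<Rightarrow> real \<Rightarrow> real \<Rightarrow> real" where
  "B_hat r \<zeta> H \<theta>k \<theta>l = 2 * r * \<zeta> * (1 / (A_hat r \<zeta> H \<theta>k \<theta>l)\<^sup>2
     - 1 / (r * \<zeta> * (sin (\<theta>l - \<theta>k))\<^sup>2 + A_hat r \<zeta> H \<theta>k \<theta>l)\<^sup>2)"

definition C_hat :: "real \<Rightarrow> real \<Rightarrow> real \<Rightarrow> real \<Rightarrow> real \<Rightarrow> real" where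
  "C_hat r \<zeta> H \<theta>k \<theta>l =
     1 / (r * \<zeta> * (sin (\<theta>l - \<theta>k))\<^sup>2 + A_hat r \<zeta> H \<theta>k \<theta>l)
     + 2 * r * \<zeta> * (sin (\<theta>l - \<theta>k))\<^sup>2 / (r * \<zeta> * (sin (\<theta>l - \<theta>k))\<^sup>2 + A_hat r \<zeta> H \<theta>k \<theta>l)\<^sup>2
     - r * \<zeta> * (sin (\<theta>l - \<theta>k))\<^sup>2 / (A_hat r \<zeta> H \<theta>k \<theta>l)\<^sup>2"

definition S_lb2 :: "real \<Rightarrow> real \<Rightarrow> real \<Rightarrow> real \<Rightarrow> real \<Rightarrow> real \<Rightarrow> real \<Rightarrow> real \<Rightarrow> real" where
  "S_lb2 r \<zeta> H P \<gamma>0 \<theta>k \<theta>l \<theta> = P * \<gamma>0 *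
     (- r * \<zeta> * (\<theta> - b_hat \<theta>k \<theta>l)\<^sup>2 / (A_hat r \<zeta> H \<theta>k \<theta>l)\<^sup>2
      + B_hat r \<zeta> H \<theta>k \<theta>l * sin (\<theta>l - \<theta>k) * (\<theta> - b_hat \<theta>k \<theta>l)
      + C_hat r \<zeta> H \<theta>k \<theta>l)"

definition S_mid :: "real \<Rightarrow> real \<Rightarrow> real \<Rightarrow> real \<Rightarrow> real \<Rightarrow> real \<Rightarrow> real \<Rightarrow> real \<Rightarrow> real" where
  "S_mid r \<zeta> H P \<gamma>0 \<theta>k \<theta>l \<theta> =
     P * \<gamma>0 / (r * \<zeta> * (\<theta> - b_hat \<theta>k \<theta>l)\<^sup>2 + A_hat r \<zeta> H \<theta>k \<theta>l)"

end

theory Submission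
  imports Defs
begin

lemma key0:
  fixes a A u s D E :: real
  assumes "A > 0" "D > 0" "E > 0" "D = a * u^2 + A" "E = a * s^2 + A"
  shows "1/D - (- a * u^2/A^2 + 2 * a * (1/A^2 - 1/E^2) * s * u
      + (1/E + 2 * a * s^2/E^2 - a * s^2/A^2))
    = a * (u-s)^2 * (a^3 * u^2 * s^4 + 2 * a^2 * u^2 * s^2 * A + a^2 * s^4 * A + a * A^2 * ((u+s)^2+2 * s^2))
      / (A^2 * D * E^2)"
proof -
  have "D \<noteq> 0" "E \<noteq> 0" "A \<noteq> 0" using assms by auto
  then show ?thesis
    apply (simp add: field_simps)
    apply (simp only: assms(4,5))
    by algebra
qed

lemma sin_lip: "\<bar>sin a - sin b\<bar> \<le> \<bar>a - b\<bar>" for a b :: real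
proof -
  have "\<bar>sin a - sin b\<bar> = 2 * \<bar>sin ((a-b)/2)\<bar> * \<bar>cos ((a+b)/2)\<bar>"
    by (simp add: sin_diff_sin abs_mult)
  also have "\<dots> \<le> 2 * \<bar>(a-b)/2\<bar> * 1"
    by (intro mult_mono abs_sin_x_le_abs_x) auto
  finally show ?thesis by simp
qed
lemma cos_quad: "cos d - y * sin d - y^2/2 \<le> cos (d+y)" for d y :: real
proof -
  define h where "h t = cos (d+t) + t* sin d + t^2/2" for t
  define h' where "h' t = - sin (d+t) + sin d + t" for t
  have der: "DERIV h t :> h' t" for t
    unfolding h_def h'_def by (auto intro!: derivative_eq_intros)
  have "h y \<ge> h 0"
  proof (cases "y > 0")
    case True
    from MVT2[OF True, of h h'] der obtain z where z: "0<z" "z<y" "h y - h 0 = (y - 0) * h' z" by blast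
    have "\<bar>sin (d+z) - sin d\<bar> \<le> \<bar>z\<bar>" using sin_lip[of "d+z" d] by simp
    then have "h' z \<ge> 0" using z unfolding h'_def by linarith
    then show ?thesis using z True by (smt (verit) mult_nonneg_nonneg)
  next
    case False
    show ?thesis
    proof (cases "y < 0")
      case True
      from MVT2[OF True, of h h'] der obtain z where z: "y<z" "z<0" "h 0 - h y = (0 - y) * h' z" by blast
      have "\<bar>sin (d+z) - sin d\<bar> \<le> \<bar>z\<bar>" using sin_lip[of "d+z" d] by simp
      then have "h' z \<le> 0" using z unfolding h'_def by linarith
      then show ?thesis using z True by (smt (verit) mult_nonneg_nonpos)
    qed (use False in auto)
  qed
  then show ?thesis unfolding h_def by simp
qed
theorem mainTheorem5:
  fixes r \<zeta> H P \<gamma>0 \<theta>k \<theta>l :: real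
  assumes "r > 0" "\<zeta> > 0" "H > 0" "P > 0" "\<gamma>0 > 0"
  shows "A_hat r \<zeta> H \<theta>k \<theta>l > 0
    \<and> (\<forall>\<theta>. S_lb2 r \<zeta> H P \<gamma>0 \<theta>k \<theta>l \<theta> \<le> S_mid r \<zeta> H P \<gamma>0 \<theta>k \<theta>l \<theta>
           \<and> S_mid r \<zeta> H P \<gamma>0 \<theta>k \<theta>l \<theta> \<le> S_max r \<zeta> H P \<gamma>0 \<theta>k \<theta>)
    \<and> S_lb2 r \<zeta> H P \<gamma>0 \<theta>k \<theta>l \<theta>l = S_mid r \<zeta> H P \<gamma>0 \<theta>k \<theta>l \<theta>l
    \<and> S_mid r \<zeta> H P \<gamma>0 \<theta>k \<theta>l \<theta>l = S_max r \<zeta> H P \<gamma>0 \<theta>k \<theta>l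
    \<and> concave_on UNIV (S_lb2 r \<zeta> H P \<gamma>0 \<theta>k \<theta>l)"
proof -
  define a where "a = r * \<zeta>"
  define sn where "sn = sin (\<theta>l - \<theta>k)"
  define cs where "cs = cos (\<theta>l - \<theta>k)"
  define A where "A = A_hat r \<zeta> H \<theta>k \<theta>l"
  define b where "b = b_hat \<theta>k \<theta>l"
  define K where "K = P * \<gamma>0"
  have a0: "a > 0" using assms unfolding a_def by simp
  have K0: "K > 0" using assms unfolding K_def by simp
  have Adef: "A = r^2 + \<zeta>^2 + H^2 - a * (2 * cs + sn^2)"
    unfolding A_def A_hat_def a_def cs_def sn_def by simp
  have sc: "sn^2 = 1 - cs^2" unfolding sn_def cs_def by (simp add: sin_squared_eq)
  have "0 \<le> (cs - 1)^2" by simp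
  moreover have "(cs - 1)^2 = cs^2 - 2 * cs + 1" by (simp add: power2_diff)
  ultimately have "2 * cs + sn^2 \<le> 2" using sc by linarith
  hence "a * (2 * cs + sn^2) \<le> 2 * a" using a0 by simp
  moreover have "2 * a \<le> r^2 + \<zeta>^2" unfolding a_def using sum_squares_bound[of r \<zeta>] by simp
  moreover have "H^2 > 0" using assms by simp
  ultimately have Apos: "A > 0" using Adef by linarith
  have mid: "S_mid r \<zeta> H P \<gamma>0 \<theta>k \<theta>l \<theta> = K / (a * (\<theta> - b)^2 + A)" for \<theta>
    unfolding S_mid_def K_def a_def b_def A_def by simp
  have lb: "S_lb2 r \<zeta> H P \<gamma>0 \<theta>k \<theta>l \<theta> = K * (- a * (\<theta> - b)^2/A^2
      + 2 * a * (1/A^2 - 1/(a * sn^2 + A)^2) * sn * (\<theta> - b)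
      + (1/(a * sn^2 + A) + 2 * a * sn^2/(a * sn^2 + A)^2 - a * sn^2/A^2))" for \<theta>
    unfolding S_lb2_def K_def a_def b_def A_def B_hat_def C_hat_def sn_def
    by (simp add: mult.assoc)
  have mx: "S_max r \<zeta> H P \<gamma>0 \<theta>k \<theta> = K / (r^2 + \<zeta>^2 + H^2 - 2 * a * cos (\<theta> - \<theta>k))" for \<theta>
    unfolding S_max_def K_def a_def by simp
  have bl: "\<theta>l - b = sn" unfolding b_def b_hat_def sn_def by simp
  have E0: "a * sn^2 + A > 0" using a0 Apos by (simp add: add_nonneg_pos)
  have ineq1: "S_lb2 r \<zeta> H P \<gamma>0 \<theta>k \<theta>l \<theta> \<le> S_mid r \<zeta> H P \<gamma>0 \<theta>k \<theta>l \<theta>" for \<theta>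
  proof -
    define u where "u = \<theta> - b"
    have D0: "a * u^2 + A > 0" using a0 Apos by (simp add: add_nonneg_pos)
    have R0: "0 \<le> a^3 * u^2 * sn^4 + 2 * a^2 * u^2 * sn^2 * A + a^2 * sn^4 * A + a * A^2 * ((u+sn)^2+2 * sn^2)"
      using a0 Apos by (intro add_nonneg_nonneg mult_nonneg_nonneg) auto
    have "0 \<le> a * (u-sn)^2 * (a^3 * u^2 * sn^4 + 2 * a^2 * u^2 * sn^2 * A + a^2 * sn^4 * A + a * A^2 * ((u+sn)^2+2 * sn^2))
      / (A^2 * (a * u^2 + A) * (a * sn^2 + A)^2)"
      using a0 R0 D0 E0 Apos by (intro divide_nonneg_pos mult_nonneg_nonneg mult_pos_pos) auto
    also have "\<dots> = 1/(a * u^2 + A) - (- a * u^2/A^2 + 2 * a * (1/A^2 - 1/(a * sn^2 + A)^2) * sn * u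
      + (1/(a * sn^2 + A) + 2 * a * sn^2/(a * sn^2 + A)^2 - a * sn^2/A^2))"
      using key0[OF Apos D0 E0 refl refl] by simp
    finally have "(- a * u^2/A^2 + 2 * a * (1/A^2 - 1/(a * sn^2 + A)^2) * sn * u
      + (1/(a * sn^2 + A) + 2 * a * sn^2/(a * sn^2 + A)^2 - a * sn^2/A^2)) \<le> 1/(a * u^2 + A)" by simp
    then have "K * (- a * u^2/A^2 + 2 * a * (1/A^2 - 1/(a * sn^2 + A)^2) * sn * u
      + (1/(a * sn^2 + A) + 2 * a * sn^2/(a * sn^2 + A)^2 - a * sn^2/A^2)) \<le> K * (1/(a * u^2 + A))"
      using K0 by (intro mult_left_mono) auto
    then show ?thesis unfolding lb mid u_def by simp
  qed
  have ineq2: "S_mid r \<zeta> H P \<gamma>0 \<theta>k \<theta>l \<theta> \<le> S_max r \<zeta> H P \<gamma>0 \<theta>k \<theta>" for \<theta>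
  proof -
    define y where "y = \<theta> - \<theta>l"
    have cq: "cs - y * sn - y^2/2 \<le> cos (\<theta> - \<theta>k)"
      using cos_quad[of "\<theta>l - \<theta>k" y] unfolding cs_def sn_def y_def by simp
    have tb: "\<theta> - b = y + sn" using bl unfolding y_def by simp
    define M where "M = r^2 + \<zeta>^2 + H^2 - 2 * a * cos (\<theta> - \<theta>k)"
    have "2 * a * cos (\<theta> - \<theta>k) \<le> 2 * a" using a0 by simp
    moreover have "2 * a \<le> r^2 + \<zeta>^2" unfolding a_def using sum_squares_bound[of r \<zeta>] by simp
    moreover have "H^2 > 0" using assms by simp
    ultimately have M0: "M > 0" unfolding M_def by linarith
    have "a * (2 * cs - 2 * y * sn - y^2) \<le> a * (2 * cos (\<theta> - \<theta>k))"
      using cq a0 by (intro mult_left_mono) auto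
    hence "M \<le> a * (\<theta> - b)^2 + A" unfolding M_def Adef tb
      by (simp add: algebra_simps power2_eq_square)
    hence "K / (a * (\<theta> - b)^2 + A) \<le> K / M" using M0 K0
      by (intro divide_left_mono) auto
    thus ?thesis unfolding mid mx M_def .
  qed
  have eq1: "S_lb2 r \<zeta> H P \<gamma>0 \<theta>k \<theta>l \<theta>l = S_mid r \<zeta> H P \<gamma>0 \<theta>k \<theta>l \<theta>l"
  proof -
    have "1/(a * sn^2 + A) - (- a * sn^2/A^2 + 2 * a * (1/A^2 - 1/(a * sn^2 + A)^2) * sn * sn
      + (1/(a * sn^2 + A) + 2 * a * sn^2/(a * sn^2 + A)^2 - a * sn^2/A^2)) = 0"
      unfolding key0[OF Apos E0 E0 refl refl] by simp
    hence "(- a * sn^2/A^2 + 2 * a * (1/A^2 - 1/(a * sn^2 + A)^2) * sn * sn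
      + (1/(a * sn^2 + A) + 2 * a * sn^2/(a * sn^2 + A)^2 - a * sn^2/A^2)) = 1/(a * sn^2 + A)"
      by linarith
    thus ?thesis unfolding lb mid bl by (metis times_divide_eq_right mult.right_neutral)
  qed
  have eq2: "S_mid r \<zeta> H P \<gamma>0 \<theta>k \<theta>l \<theta>l = S_max r \<zeta> H P \<gamma>0 \<theta>k \<theta>l"
    unfolding mid mx bl Adef cs_def[symmetric]
    by (simp add: algebra_simps)
  have conc: "concave_on UNIV (S_lb2 r \<zeta> H P \<gamma>0 \<theta>k \<theta>l)"
    unfolding concave_on_iff
  proof (intro conjI ballI allI impI)
    fix x y u v :: real
    assume uv: "u \<ge> 0" "v \<ge> 0" "u + v = 1"
    define \<beta> where "\<beta> = 2 * a * (1/A^2 - 1/(a * sn^2 + A)^2) * sn"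
    define \<gamma> where "\<gamma> = 1/(a * sn^2 + A) + 2 * a * sn^2/(a * sn^2 + A)^2 - a * sn^2/A^2"
    define k where "k = a / A^2"
    have f: "S_lb2 r \<zeta> H P \<gamma>0 \<theta>k \<theta>l t = K * (- k * (t - b)^2 + \<beta> * (t - b) + \<gamma>)" for t
      unfolding lb \<beta>_def \<gamma>_def k_def by (simp add: algebra_simps)
    have k0: "k \<ge> 0" unfolding k_def using a0 by simp
    have v: "v = 1 - u" using uv by simp
    have "u * (- k * (x - b)^2 + \<beta> * (x - b) + \<gamma>) + v * (- k * (y - b)^2 + \<beta> * (y - b) + \<gamma>)
       + k * u * v * (x - y)^2
       = - k * (u * x + v * y - b)^2 + \<beta> * (u * x + v * y - b) + \<gamma>"
      unfolding v by (simp add: algebra_simps power2_eq_square)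
    moreover have "k * u * v * (x - y)^2 \<ge> 0" using k0 uv by simp
    ultimately have "u * (- k * (x - b)^2 + \<beta> * (x - b) + \<gamma>) + v * (- k * (y - b)^2 + \<beta> * (y - b) + \<gamma>)
       \<le> - k * (u * x + v * y - b)^2 + \<beta> * (u * x + v * y - b) + \<gamma>" by linarith
    hence "K * (u * (- k * (x - b)^2 + \<beta> * (x - b) + \<gamma>) + v * (- k * (y - b)^2 + \<beta> * (y - b) + \<gamma>))
       \<le> K * (- k * (u * x + v * y - b)^2 + \<beta> * (u * x + v * y - b) + \<gamma>)"
      using K0 by (intro mult_left_mono) auto
    thus "u * S_lb2 r \<zeta> H P \<gamma>0 \<theta>k \<theta>l x + v * S_lb2 r \<zeta> H P \<gamma>0 \<theta>k \<theta>l y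
        \<le> S_lb2 r \<zeta> H P \<gamma>0 \<theta>k \<theta>l (u *\<^sub>R x + v *\<^sub>R y)"
      unfolding f by (simp add: algebra_simps)
  qed simp
  show ?thesis using Apos ineq1 ineq2 eq1 eq2 conc unfolding A_def by blast
qed

end
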